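(* For every integer $a\geq 1$, $$\sum_{n\geq 1}\frac{H_{2n-1}}{(2n-1)^{2a}}=\frac{2a+1}{2}\lambda(2a+1)-\sum_{j=1}^{a-1}\zeta(2a+1-2j)\lambda(2j),$$ where an empty sum equals $0$.
   Context: $H_n=1+\frac12+\cdots+\frac1n$. For real $s>1$, $\lambda(s)=\sum_{n\geq 1}\frac{1}{(2n-1)^s}=(1-2^{-s})\zeta(s)$, and $\zeta$ is the Riemann zeta function. *)

theory Defs
  imports "HOL-Analysis.Analysis"
begin

definition zeta :: "real \<Rightarrow> real" where
  "zeta s = (\<Sum>n. 1 / (real (Suc n)) powr s)"

text \<open>Dirichlet lambda function: lambda s = sum over n >= 1 of 1/(2n-1)^s = (1 - 2^(-s)) zeta s.\<close>
definition dlambda :: "real \<Rightarrow> real" where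
  "dlambda s = (1 - 2 powr (-s)) * zeta s"

end

theory Submission
  imports Defs "HOL-Real_Asymp.Real_Asymp"
begin


lemma pf1:
  fixes m k :: real assumes "m > 0" "k > 0" "m \<noteq> k"
  shows "1/((m^2-k^2)*m) = 1/(2*k^2)*((1/(m+k) - 1/m) + (1/(m-k) - 1/m))"
proof -
  have a: "m - k \<noteq> 0" "m + k \<noteq> 0" using assms by auto
  have f: "m^2 - k^2 = (m-k)*(m+k)" by (simp add: power2_eq_square algebra_simps)
  have e: "m^2 - k^2 \<noteq> 0" unfolding f using assms by simp
  have s1: "1/(m+k) + 1/(m-k) = ((m-k)+(m+k))/((m+k)*(m-k))" using a by (simp add: add_frac_eq)
  have s2: "(m+k)*(m-k) = m^2-k^2" by (simp add: power2_eq_square algebra_simps)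
  have s3: "(m-k)+(m+k) = 2*m" by simp
  have s4: "2*m/(m^2-k^2) - 2/m = (2*m*m - 2*(m^2-k^2))/((m^2-k^2)*m)" using e assms by (simp add: diff_frac_eq)
  have s5: "2*m*m - 2*(m^2-k^2) = 2*k^2" by (simp add: power2_eq_square)
  have "1/(2*k^2)*((1/(m+k) - 1/m) + (1/(m-k) - 1/m)) = 1/(2*k^2)*((1/(m+k) + 1/(m-k)) - 2/m)" by simp
  also have "\<dots> = 1/(2*k^2)*(2*k^2/((m^2-k^2)*m))" unfolding s1 s2 s3 s4 s5 ..
  also have "\<dots> = 1/((m^2-k^2)*m)" using assms by simp
  finally show ?thesis by simp
qed
lemma pf2:
  fixes m k :: real assumes "m > 0" "k > 0" "m \<noteq> k"
  shows "1/(m^2-k^2) = 1/(2*m)*(1/(k+m) - 1/(k-m))"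
proof -
  have a: "k - m \<noteq> 0" "m + k \<noteq> 0" "k + m \<noteq> 0" using assms by auto
  have f: "m^2 - k^2 = (m-k)*(m+k)" by (simp add: power2_eq_square algebra_simps)
  have e: "m^2 - k^2 \<noteq> 0" unfolding f using assms by simp
  have 1: "1/(2*m)*(1/(k+m) - 1/(k-m)) = ((k - m) - (k+m))/(2*m*((k+m)*(k-m)))"
    using a assms by (simp add: diff_frac_eq)
  have 2: "(k+m)*(k-m) = -(m^2-k^2)" by (simp add: power2_eq_square algebra_simps)
  have gen: "\<And>c x::real. c \<noteq> 0 \<Longrightarrow> (-c)/(c*(-x)) = 1/x" by simp
  have 3: "(-2*m)/(2*m*(-(m^2-k^2))) = 1/(m^2-k^2)" using gen[of "2*m" "m^2-k^2"] assms by simp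
  have n: "(k - m) - (k+m) = -2*m" by simp
  show ?thesis by (simp only: 1 2 n 3)
qed
lemma tel_shift:
  fixes h :: "nat \<Rightarrow> real"
  assumes "h \<longlonglongrightarrow> 0"
  shows "(\<lambda>n. h (n + d) - h n) sums (- (\<Sum>n<d. h n))"
proof (induction d)
  case 0 then show ?case by simp
next
  case (Suc d)
  have "(\<lambda>n. h (Suc n + d) - h (n + d)) sums (0 - h (0 + d))"
    using telescope_sums[of "\<lambda>n. h (n + d)" 0] LIMSEQ_ignore_initial_segment[OF assms, of d] by simp
  from sums_add[OF Suc.IH this] show ?case by (simp add: algebra_simps)
qed

lemma harm_tel: "(\<lambda>n. 1/(real n + 1) - 1/(real n + 1 + real d)) sums harm d"
proof -
  have lim: "(\<lambda>n. 1/(real n + 1)) \<longlonglongrightarrow> 0" by real_asymp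
  have "(\<lambda>n. 1/(real (n+d) + 1) - 1/(real n + 1)) sums (- (\<Sum>n<d. 1/(real n + 1)))"
    using tel_shift[OF lim, of d] by simp
  from sums_minus[OF this] show ?thesis
    by (simp add: harm_altdef field_simps add_ac)
qed

lemma sum_inv_lessThan: "(\<Sum>i<k. 1 / real i) = harm (k - 1)"
proof (cases k)
  case 0 then show ?thesis by (simp add: harm_altdef)
next
  case (Suc k') then show ?thesis
    unfolding Suc sum.lessThan_Suc_shift by (simp add: harm_altdef field_simps)
qed

lemma sliceA:
  fixes k :: nat assumes k: "k \<ge> 1"
  shows "(\<lambda>j. 1 / ((real (j+1)^2 - real k^2) * real (j+1))) sums ((5/(4*real k) - harm k) / real k^2)"
proof -
  define T1 where "T1 = (\<lambda>j::nat. 1/(real j + 1 + real k) - 1/(real j + 1))"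
  define T2 where "T2 = (\<lambda>j::nat. 1/(real (j+1) - real k) - 1/(real j + 1))"
  have s1: "T1 sums (- harm k)"
    using sums_minus[OF harm_tel[of k]] by (simp add: T1_def)
  have sh: "(\<lambda>i. T2 (i + k)) sums harm k"
    using harm_tel[of k] by (simp add: T2_def algebra_simps)
  have fin: "(\<Sum>i<k. T2 i) = - harm (k - 1) - harm k"
  proof -
    have a: "(\<Sum>i<k. 1/(real (i+1) - real k)) = - harm (k-1)"
    proof -
      have "(\<Sum>i<k. 1/(real (i+1) - real k)) = (\<Sum>i<k. 1/(real (k - Suc i + 1) - real k))"
        by (rule sum.nat_diff_reindex[symmetric])
      also have "\<dots> = (\<Sum>i<k. - (1 / real i))"
        by (rule sum.cong) (auto simp: of_nat_diff)
      also have "\<dots> = - harm (k-1)" by (simp add: sum_negf sum_inv_lessThan)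
      finally show ?thesis .
    qed
    have b: "(\<Sum>i<k. 1/(real i + 1)) = harm k" by (simp add: harm_altdef field_simps)
    show ?thesis unfolding T2_def sum_subtractf a b by simp
  qed
  have s2: "T2 sums (- harm (k-1))"
    using sh fin by (simp add: sums_iff_shift)
  have hk: "harm k = harm (k-1) + 1 / real k"
    using k harm_Suc[of "k-1"] by (simp add: field_simps)
  have s3: "(\<lambda>j. 1/(2*real k^2) * (T1 j + T2 j) + (if j = k - 1 then 3/(4*real k^3) else 0))
     sums (1/(2*real k^2) * (- harm k + - harm (k-1)) + 3/(4*real k^3))"
    by (intro sums_add sums_mult s1 s2 sums_single[where f="\<lambda>_. 3/(4*real k^3)", simplified])
  have eq: "1 / ((real (j+1)^2 - real k^2) * real (j+1)) =
      1/(2*real k^2) * (T1 j + T2 j) + (if j = k - 1 then 3/(4*real k^3) else 0)" for j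
  proof (cases "j = k - 1")
    case True
    then have "real (j+1) = real k" using k by simp
    then show ?thesis using True k by (simp add: T1_def T2_def field_simps power2_eq_square power3_eq_cube)
  next
    case False
    then have ne: "real (j+1) \<noteq> real k" using k by simp
    show ?thesis using False pf1[of "real (j+1)" "real k"] ne k
      by (simp add: T1_def T2_def add_ac)
  qed
  have val: "1/(2*real k^2) * (- harm k + - harm (k-1)) + 3/(4*real k^3) = (5/(4*real k) - harm k) / real k^2"
    using k by (simp add: hk field_simps power2_eq_square power3_eq_cube)
  show ?thesis using s3 unfolding eq[symmetric] val .
qed


lemma sliceB:
  fixes m :: nat assumes m: "m \<ge> 1"
  shows "(\<lambda>i. 1/(real m^2 - real (2*i+1)^2)) sums (if odd m then -1/(4*real m^2) else 0)"
proof -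
  define h where "h = (\<lambda>i::nat. 1/(2*real i + 1 - real m))"
  have lim: "h \<longlonglongrightarrow> 0" unfolding h_def by real_asymp
  have t: "(\<lambda>i. h (i+m) - h i) sums (-(\<Sum>i<m. h i))" by (rule tel_shift[OF lim])
  have z: "(\<Sum>i<m. h i) = 0"
  proof -
    have "(\<Sum>i<m. h i) = (\<Sum>i<m. h (m - Suc i))" by (rule sum.nat_diff_reindex[symmetric])
    also have "\<dots> = (\<Sum>i<m. - h i)"
    proof (rule sum.cong)
      fix i assume "i \<in> {..<m}"
      then have "2*real (m - Suc i) + 1 - real m = -(2*real i + 1 - real m)" by (simp add: of_nat_diff)
      then show "h (m - Suc i) = - h i" by (simp only: h_def divide_minus_right)
    qed simp
    finally have "(\<Sum>i<m. h i) = - (\<Sum>i<m. h i)" by (simp add: sum_negf)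
    then show ?thesis by simp
  qed
  have s1: "(\<lambda>i. 1/(2*real m) * (h (i+m) - h i)) sums 0"
    using sums_mult[OF t, of "1/(2*real m)"] z by simp
  have s2: "(\<lambda>i. if 2*i+1 = m then 1/(4*real m^2) else 0) sums (if odd m then 1/(4*real m^2) else 0)"
  proof (cases "odd m")
    case True
    then obtain p where p: "m = 2*p+1" by (metis oddE)
    have "(\<lambda>i. if 2*i+1 = m then 1/(4*real m^2) else 0) = (\<lambda>i. if i = p then 1/(4*real m^2) else 0)"
      using p by auto
    then show ?thesis using True sums_single[of p "\<lambda>_. 1/(4*real m^2)"] by simp
  next
    case False
    then have "(\<lambda>i. if 2*i+1 = m then 1/(4*real m^2) else 0) = (\<lambda>i. 0)" by (auto intro!: ext)
    then show ?thesis using False by simp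
  qed
  have eq: "1/(real m^2 - real (2*i+1)^2) = 1/(2*real m) * (h (i+m) - h i) - (if 2*i+1 = m then 1/(4*real m^2) else 0)" for i
  proof (cases "2*i+1 = m")
    case True
    then have a: "2*real (i+m) + 1 - real m = 2 * real m" by simp
    have b: "2*real i + 1 - real m = 0" using True by simp
    show ?thesis using True m unfolding h_def a b by (simp add: power2_eq_square)
  next
    case False
    then have ne: "real m \<noteq> real (2*i+1)" by simp
    show ?thesis using False pf2[of "real m" "real (2*i+1)"] ne m unfolding h_def
      by (simp add: add_ac)
  qed
  show ?thesis unfolding eq using sums_diff[OF s1 s2] by (cases "odd m") simp_all
qed



lemma zeta_sums:
  assumes r: "r \<ge> 2"
  shows "(\<lambda>n. 1/real (n+1)^r) sums zeta (real r)"
proof -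
  have "summable (\<lambda>n. inverse (real n ^ r))" by (rule inverse_power_summable[OF r])
  then have "summable (\<lambda>n. inverse (real (Suc n) ^ r))" by (subst summable_Suc_iff)
  then have sm: "summable (\<lambda>n. 1/real (n+1)^r)" by (simp add: inverse_eq_divide)
  have "zeta (real r) = (\<Sum>n. 1/real (n+1)^r)" unfolding zeta_def
    by (simp add: powr_realpow)
  then show ?thesis using sm by (simp add: summable_sums)
qed

lemma lambda_sums:
  assumes r: "r \<ge> 2"
  shows "(\<lambda>n. 1/real (2*n+1)^r) sums dlambda (real r)"
proof -
  define z where "z = (\<lambda>n::nat. 1/real (n+1)^r)"
  have z: "z sums zeta (real r)" unfolding z_def by (rule zeta_sums[OF r])
  have g: "(\<lambda>n. sum z {n*2..<n*2+2}) sums zeta (real r)" using sums_group[OF z, of 2] by simp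
  have gs: "sum z {n*2..<n*2+2} = 1/real (2*n+1)^r + (1/2^r) * z n" for n
  proof -
    have "{n*2..<n*2+2} = {n*2, n*2+1}" by auto
    moreover have e: "real (n*2+1+1)^r = 2^r * real (n+1)^r"
    proof -
      have "real (n*2+1+1) = 2 * real (n+1)" by simp
      then show ?thesis by (simp only: power_mult_distrib)
    qed
    ultimately show ?thesis unfolding z_def using e by (simp add: mult_ac)
  qed
  have "(\<lambda>n. 1/real (2*n+1)^r + (1/2^r) * z n) sums zeta (real r)" using g unfolding gs .
  moreover have "(\<lambda>n. (1/2^r) * z n) sums ((1/2^r) * zeta (real r))" by (rule sums_mult[OF z])
  ultimately have "(\<lambda>n. (1/real (2*n+1)^r + (1/2^r) * z n) - (1/2^r) * z n) sums (zeta (real r) - (1/2^r) * zeta (real r))"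
    by (rule sums_diff)
  moreover have "dlambda (real r) = zeta (real r) - (1/2^r) * zeta (real r)"
    unfolding dlambda_def by (simp add: powr_minus powr_realpow field_simps)
  ultimately show ?thesis by simp
qed

lemma odd_reindex:
  assumes r: "r \<ge> 2"
  shows "(\<lambda>j. if odd (j+1) then 1/real (j+1)^r else 0) sums dlambda (real r)"
proof -
  have sm: "strict_mono (\<lambda>n::nat. 2*n)" by (rule strict_monoI) simp
  have "(\<lambda>n. (\<lambda>j. if odd (j+1) then 1/real (j+1)^r else 0) (2*n)) sums dlambda (real r) \<longleftrightarrow>
        (\<lambda>j. if odd (j+1) then 1/real (j+1)^r else (0::real)) sums dlambda (real r)"
  proof (rule sums_mono_reindex[OF sm])
    fix n :: nat assume "n \<notin> range (\<lambda>n. 2*n)"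
    then have "odd n" by (metis evenE rangeI)
    then show "(if odd (n+1) then 1/real (n+1)^r else 0) = 0" by simp
  qed
  moreover have "(\<lambda>n. (\<lambda>j. if odd (j+1) then 1/real (j+1)^r else 0) (2*n)) = (\<lambda>n. 1/real (2*n+1)^r)"
    by simp
  ultimately show ?thesis using lambda_sums[OF r] by simp
qed

lemma harm_sqrt: "harm n \<le> 2 * sqrt (real n)"
proof (induction n)
  case 0 then show ?case by (simp add: harm_altdef)
next
  case (Suc n)
  define a where "a = sqrt (real n)"
  define c where "c = sqrt (real (Suc n))"
  have a0: "a \<ge> 0" unfolding a_def by simp
  have ac: "a \<le> c" unfolding a_def c_def by simp
  have c1: "c \<ge> 1" unfolding c_def by simp
  have sq: "c^2 - a^2 = 1" unfolding a_def c_def by simp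
  have "1 = (c - a) * (c + a)" using sq by (simp add: power2_eq_square algebra_simps)
  also have "\<dots> \<le> (c - a) * (2 * c)" using ac a0 by (intro mult_left_mono) auto
  finally have 1: "1 \<le> (c - a) * (2 * c)" .
  have "1 / real (Suc n) = 1 / c^2" unfolding c_def by simp
  also have "\<dots> \<le> 1 / c" using c1 by (simp add: power2_eq_square divide_le_cancel field_simps)
  also have "\<dots> \<le> 2 * (c - a)" using 1 c1 by (simp add: field_simps)
  finally have 2: "1 / real (Suc n) \<le> 2 * (c - a)" .
  have "harm (Suc n) = harm n + 1 / real (Suc n)" by (simp add: harm_Suc inverse_eq_divide)
  also have "\<dots> \<le> 2 * a + 2 * (c - a)" using Suc.IH 2 unfolding a_def by linarith
  finally show ?case unfolding c_def by simp
qed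



lemma alg_step:
  fixes x y D X Y :: real
  assumes "x \<noteq> 0" "y \<noteq> 0" "D \<noteq> 0" "X \<noteq> 0" "Y \<noteq> 0" and hD: "D = x^2 - y^2"
  shows "(1/x^2)*(1/(D*x*Y) - 1/(D*(X*x))) + 1/(x^3*(Y*y^2)) = 1/(D*x*(Y*y^2)) - 1/(D*(X*x^3))"
proof -
  have "(1/x^2)*(1/(D*x*Y)) + 1/(x^3*(Y*y^2)) = (y^2 + D)/(D*x^3*Y*y^2)"
    using assms by (simp add: field_simps power2_eq_square power3_eq_cube)
  also have "y^2 + D = x^2" using hD by simp
  also have "x^2/(D*x^3*Y*y^2) = 1/(D*x*(Y*y^2))"
    using assms by (simp add: field_simps power2_eq_square power3_eq_cube)
  finally have 1: "(1/x^2)*(1/(D*x*Y)) + 1/(x^3*(Y*y^2)) = 1/(D*x*(Y*y^2))" .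
  have 2: "(1/x^2)*(1/(D*(X*x))) = 1/(D*(X*x^3))"
    using assms by (simp add: field_simps power2_eq_square power3_eq_cube)
  show ?thesis using 1 2 by (simp only: right_diff_distrib)
qed

lemma geom_id:
  fixes x y :: real
  assumes x: "x > 0" and y: "y > 0" and xy: "x \<noteq> y"
  shows "(\<Sum>l=1..b. 1/(x^(2*b+3-2*l) * y^(2*l))) = 1/((x^2-y^2)*x*y^(2*b)) - 1/((x^2-y^2)*x^(2*b+1))"
proof (induction b)
  case 0 then show ?case by simp
next
  case (Suc b)
  have D: "x^2 - y^2 \<noteq> 0"
  proof -
    have "x^2 - y^2 = (x-y)*(x+y)" by (simp add: power2_eq_square algebra_simps)
    then show ?thesis using x y xy by simp
  qed
  have terms: "(\<Sum>l=1..b. 1/(x^(2*Suc b+3-2*l) * y^(2*l))) = (1/x^2) * (\<Sum>l=1..b. 1/(x^(2*b+3-2*l) * y^(2*l)))"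
    unfolding sum_distrib_left
  proof (rule sum.cong)
    fix l assume "l \<in> {1..b}"
    then have "2*Suc b+3-2*l = (2*b+3-2*l) + 2" by auto
    then show "1/(x^(2*Suc b+3-2*l) * y^(2*l)) = (1/x^2) * (1/(x^(2*b+3-2*l) * y^(2*l)))"
      by (simp add: power_add power2_eq_square)
  qed simp
  have "(\<Sum>l=1..Suc b. 1/(x^(2*Suc b+3-2*l) * y^(2*l))) =
        (\<Sum>l=1..b. 1/(x^(2*Suc b+3-2*l) * y^(2*l))) + 1/(x^3 * y^(2*Suc b))"
    by (simp add: sum.cl_ivl_Suc)
  also have "\<dots> = (1/x^2) * (1/((x^2-y^2)*x*y^(2*b)) - 1/((x^2-y^2)*(x^(2*b)*x))) + 1/(x^3 * (y^(2*b)*y^2))"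
    unfolding terms Suc.IH by (simp add: power_add power2_eq_square mult_ac)
  also have "\<dots> = 1/((x^2-y^2)*x*(y^(2*b)*y^2)) - 1/((x^2-y^2)*(x^(2*b)*x^3))"
    by (rule alg_step) (use x y D in auto)
  also have "\<dots> = 1/((x^2-y^2)*x*y^(2*Suc b)) - 1/((x^2-y^2)*x^(2*Suc b+1))"
    by (simp add: power_add power2_eq_square power3_eq_cube mult_ac)
  finally show ?case .
qed

lemma absbound:
  fixes M K :: real assumes M: "M > 0" and K: "K > 0"
  shows "\<bar>1/(M^2-K^2)\<bar> \<le> -(1/(M^2-K^2)) + 2*(if K < M then 1/(M*(M-K)) else 0)"
proof (cases "K < M")
  case True
  have f: "M^2-K^2 = (M-K)*(M+K)" by (simp add: power2_eq_square algebra_simps)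
  have p: "(M-K)*(M+K) > 0" using True K M by simp
  have le: "(M-K)*M \<le> (M-K)*(M+K)" by (rule mult_left_mono) (use K True in auto)
  have "1/((M-K)*(M+K)) \<le> 1/((M-K)*M)"
    by (rule divide_left_mono[OF le]) (use K M True in auto)
  then have "1/((M-K)*(M+K)) \<le> 1/(M*(M-K))" by (simp add: mult.commute)
  then show ?thesis using True p unfolding f by simp
next
  case False
  then have "M^2 - K^2 \<le> 0" using M K by (simp add: power_mono)
  then show ?thesis using False by (simp add: divide_nonpos_nonneg abs_if)
qed



lemma has_sum_of_sums:
  fixes f :: "nat \<Rightarrow> real"
  assumes "f summable_on UNIV" "f sums S"
  shows "(f has_sum S) UNIV"
proof -
  have h: "(f has_sum infsum f UNIV) UNIV" using assms(1) by (rule has_sum_infsum)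
  then have "f sums infsum f UNIV" by (rule has_sum_imp_sums)
  then have "infsum f UNIV = S" using assms(2) sums_unique2 by blast
  then show ?thesis using h by simp
qed

lemma finsum_bound:
  fixes n :: nat
  shows "(\<Sum>i\<in>{i. 2*i+1 < n}. 1/(real n - real (2*i+1))) \<le> harm n"
proof -
  have inj: "inj_on (\<lambda>i::nat. 2*i+1) {i. 2*i+1 < n}" by (auto simp: inj_on_def)
  have "(\<Sum>i\<in>{i. 2*i+1 < n}. 1/(real n - real (2*i+1))) = (\<Sum>k\<in>(\<lambda>i. 2*i+1)`{i. 2*i+1 < n}. 1/(real n - real k))"
    by (subst sum.reindex[OF inj]) (simp add: comp_def)
  also have "\<dots> \<le> (\<Sum>k\<in>{..<n}. 1/(real n - real k))"
    by (rule sum_mono2) auto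
  also have "\<dots> = (\<Sum>i<n. 1/(real n - real (n - Suc i)))"
    by (rule sum.nat_diff_reindex[symmetric])
  also have "\<dots> = (\<Sum>i<n. 1/(real i + 1))"
    by (rule sum.cong) (auto simp: of_nat_diff)
  also have "\<dots> = harm n" by (simp add: harm_altdef field_simps)
  finally show ?thesis .
qed

lemma sq_powr:
  fixes x :: real assumes "x > 0"
  shows "sqrt x / x^2 = x powr (-3/2)"
proof -
  have "x powr (-3/2) = x powr (1/2 - 2)" by simp
  also have "\<dots> = x powr (1/2) / x powr 2" by (rule powr_diff)
  also have "\<dots> = sqrt x / x^2" using assms by (simp add: powr_half_sqrt)
  finally show ?thesis by simp
qed

lemma summable_powr32: "summable (\<lambda>j. real (j+1) powr (-3/2))"
proof -
  have "summable (\<lambda>n. real n powr (-3/2))" by (subst summable_real_powr_iff) simp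
  then have "summable (\<lambda>n. real (Suc n) powr (-3/2))" by (subst summable_Suc_iff)
  then show ?thesis by simp
qed



lemma hf:
  fixes x h :: real assumes x: "x > 0"
  shows "(5/4) * (1/x^(N+3)) - (5/(4*x) - h)/x^2/x^N = h/x^(N+2)"
proof -
  define P where "P = x^(N+2)"
  have P0: "P > 0" unfolding P_def using x by simp
  have 1: "x^(N+3) = x * P"
  proof -
    have "N+3 = Suc (N+2)" by simp
    then show ?thesis unfolding P_def by (simp only: power_Suc)
  qed
  have 2: "x^2 * x^N = P" unfolding P_def by (simp add: power_add add.commute power2_eq_square)
  have "(5/4) * (1/x^(N+3)) - (5/(4*x) - h)/x^2/x^N = (5/4) * (1/(x*P)) - (5/(4*x) - h)/P"
    unfolding 1 divide_divide_eq_left 2 ..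
  also have "\<dots> = h/P" using x P0 by (simp add: field_simps)
  finally show ?thesis unfolding P_def .
qed

lemma main_b:
  fixes b :: nat
  shows "(\<lambda>n. harm (2*n+1) / (real (2*n+1))^(2*b+2)) sums
    ((real b + 3/2) * dlambda (real (2*b+3)) - (\<Sum>l=1..b. zeta (real (2*b+3-2*l)) * dlambda (real (2*l))))"
proof -
  define M where "M = (\<lambda>j::nat. real (j+1))"
  define K where "K = (\<lambda>i::nat. real (2*i+1))"
  define p1 where "p1 = (\<lambda>j i. 1/((M j^2 - K i^2) * M j^(2*b+1)))"
  define pA where "pA = (\<lambda>j i. 1/((M j^2 - K i^2) * M j * K i^(2*b)))"
  define gg where "gg = (\<lambda>j i. \<Sum>l=1..b. 1/(M j^(2*b+3-2*l) * K i^(2*l)))"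
  define GA where "GA = (\<lambda>i. \<Sum>l=1..b. zeta (real (2*b+3-2*l)) * (1/K i^(2*l)))"
  define CA where "CA = (\<lambda>i. (5/(4*K i) - harm (2*i+1)) / K i^2 / K i^(2*b))"
  define Lam where "Lam = dlambda (real (2*b+3))"
  define ZL where "ZL = (\<Sum>l=1..b. zeta (real (2*b+3-2*l)) * dlambda (real (2*l)))"
  have Mpos: "\<And>j. M j \<ge> 1" unfolding M_def by simp
  have Kpos: "\<And>i. K i \<ge> 1" unfolding K_def by simp

  have A: "(\<lambda>j. gg j i) sums GA i" for i
  proof -
    have "\<And>l. l \<in> {1..b} \<Longrightarrow> (\<lambda>j. 1/(M j^(2*b+3-2*l)) * (1/K i^(2*l))) sums (zeta (real (2*b+3-2*l)) * (1/K i^(2*l)))"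
      unfolding M_def by (intro sums_mult2 zeta_sums) auto
    then have "(\<lambda>j. \<Sum>l=1..b. 1/(M j^(2*b+3-2*l)) * (1/K i^(2*l))) sums GA i"
      unfolding GA_def by (rule sums_sum)
    then show ?thesis unfolding gg_def by simp
  qed

  have B: "GA sums ZL"
  proof -
    have "\<And>l. l \<in> {1..b} \<Longrightarrow> (\<lambda>i. zeta (real (2*b+3-2*l)) * (1/K i^(2*l))) sums (zeta (real (2*b+3-2*l)) * dlambda (real (2*l)))"
      unfolding K_def by (intro sums_mult lambda_sums) auto
    then show ?thesis unfolding GA_def ZL_def by (rule sums_sum)
  qed

  have C: "(\<lambda>j. pA j i) sums CA i" for i
  proof -
    have "(\<lambda>j. 1 / ((real (j+1)^2 - real (2*i+1)^2) * real (j+1)) / K i^(2*b)) sums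
          ((5/(4*real (2*i+1)) - harm (2*i+1)) / real (2*i+1)^2 / K i^(2*b))"
      by (intro sums_divide sliceA) simp
    then show ?thesis unfolding pA_def CA_def M_def K_def by (simp add: divide_divide_eq_left)
  qed

  have E: "gg j i = pA j i - p1 j i + (if j = 2*i then real b / K i^(2*b+3) else 0)" for j i
  proof (cases "j = 2*i")
    case True
    then have MK: "M j = K i" unfolding M_def K_def by simp
    have "gg j i = (\<Sum>l=1..b. 1/(K i^(2*b+3)))"
      unfolding gg_def MK
    proof (rule sum.cong)
      fix l assume "l \<in> {1..b}"
      then have "2*b+3-2*l + 2*l = 2*b+3" by auto
      then show "1/(K i^(2*b+3-2*l) * K i^(2*l)) = 1/(K i^(2*b+3))" by (simp add: power_add[symmetric])
    qed simp
    then show ?thesis using True unfolding pA_def p1_def MK by simp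
  next
    case False
    then have MK: "M j \<noteq> K i" unfolding M_def K_def by simp
    have "gg j i = 1/((M j^2-K i^2)*M j*K i^(2*b)) - 1/((M j^2-K i^2)*M j^(2*b+1))"
      unfolding gg_def by (rule geom_id) (use Mpos[of j] Kpos[of i] MK in auto)
    then show ?thesis using False unfolding pA_def p1_def by simp
  qed

  define dd where "dd = (\<lambda>j. if odd (j+1) then -1/(4*M j^2) else 0)"
  define Dm where "Dm = (\<lambda>j i. (1/M j^(2*b+1)) * (-(1/(M j^2 - K i^2)) + 2*(if 2*i+1 < j+1 then 1/(M j*(M j - K i)) else 0)))"
  define FS where "FS = (\<lambda>j. \<Sum>i\<in>{i. 2*i+1 < j+1}. 1/(M j*(M j - K i)))"
  define DS where "DS = (\<lambda>j. (1/M j^(2*b+1)) * (-(dd j) + 2 * FS j))"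

  have rowB: "(\<lambda>i. 1/(M j^2 - K i^2)) sums dd j" for j
    using sliceB[of "j+1"] unfolding M_def K_def dd_def by simp
  have bnd: "\<bar>1/(M j^2 - K i^2)\<bar> \<le> -(1/(M j^2 - K i^2)) + 2*(if 2*i+1 < j+1 then 1/(M j*(M j - K i)) else 0)" for j i
  proof -
    have "K i < M j \<longleftrightarrow> 2*i+1 < j+1" unfolding M_def K_def by (simp only: of_nat_less_iff)
    then show ?thesis using absbound[of "M j" "K i"] Mpos[of j] Kpos[of i] by simp
  qed
  have Dnn: "Dm j i \<ge> 0" for j i
  proof -
    have "0 \<le> -(1/(M j^2 - K i^2)) + 2*(if 2*i+1 < j+1 then 1/(M j*(M j - K i)) else 0)"
      using bnd[of j i] abs_ge_zero order_trans by blast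
    then show ?thesis unfolding Dm_def using Mpos[of j] by simp
  qed
  have pD: "\<bar>p1 j i\<bar> \<le> Dm j i" for j i
  proof -
    have "\<bar>p1 j i\<bar> = \<bar>1/(M j^2 - K i^2)\<bar> * (1/M j^(2*b+1))"
      unfolding p1_def using Mpos[of j] by (simp add: abs_mult)
    also have "\<dots> \<le> (-(1/(M j^2 - K i^2)) + 2*(if 2*i+1 < j+1 then 1/(M j*(M j - K i)) else 0)) * (1/M j^(2*b+1))"
      by (rule mult_right_mono[OF bnd]) (use Mpos[of j] in simp)
    finally show ?thesis unfolding Dm_def by (simp add: mult.commute)
  qed
  have finA: "finite {i::nat. 2*i+1 < j+1}" for j
    by (rule finite_subset[of _ "{..j}"]) auto
  have rowD: "(\<lambda>i. Dm j i) sums DS j" for j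
  proof -
    have "(\<lambda>i. if 2*i+1 < j+1 then 1/(M j*(M j - K i)) else 0) sums FS j"
      unfolding FS_def using sums_If_finite[OF finA[of j]] by simp
    then have "(\<lambda>i. -(1/(M j^2 - K i^2)) + 2*(if 2*i+1 < j+1 then 1/(M j*(M j - K i)) else 0)) sums (-(dd j) + 2 * FS j)"
      by (intro sums_add sums_minus sums_mult rowB)
    then show ?thesis unfolding Dm_def DS_def by (rule sums_mult)
  qed
  have DSnn: "DS j \<ge> 0" for j
    using sums_le[OF _ sums_zero rowD[of j]] Dnn by auto
  have FSb: "FS j \<le> harm (j+1) / M j" for j
  proof -
    have "FS j = (1/M j) * (\<Sum>i\<in>{i. 2*i+1 < j+1}. 1/(real (j+1) - real (2*i+1)))"
      unfolding FS_def sum_distrib_left M_def K_def by simp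
    also have "\<dots> \<le> (1/M j) * harm (j+1)"
      by (rule mult_left_mono[OF finsum_bound]) (use Mpos[of j] in simp)
    finally show ?thesis by simp
  qed
  have FSnn: "FS j \<ge> 0" for j
    unfolding FS_def M_def K_def by (intro sum_nonneg) auto
  have DSb: "DS j \<le> 1/(4*M j^3) + 4 * M j powr (-3/2)" for j
  proof -
    have d1: "-(dd j) \<le> 1/(4*M j^2)" "-(dd j) \<ge> 0" unfolding dd_def using Mpos[of j] by auto
    have pw: "M j \<le> M j^(2*b+1)"
    proof -
      have "M j * 1 \<le> M j * M j^(2*b)" by (rule mult_left_mono) (use Mpos[of j] in \<open>auto intro: one_le_power\<close>)
      then show ?thesis by simp
    qed
    have i1: "1/M j^(2*b+1) \<le> 1/M j"
      using pw Mpos[of j] by (intro divide_left_mono) auto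
    have "DS j \<le> (1/M j) * (1/(4*M j^2) + 2 * (harm (j+1) / M j))"
      unfolding DS_def
      by (rule mult_mono[OF i1]) (use d1 FSb[of j] FSnn[of j] Mpos[of j] in auto)
    also have "\<dots> = 1/(4*M j^3) + 2 * harm (j+1) / M j^2"
      using Mpos[of j] by (simp add: field_simps power2_eq_square power3_eq_cube)
    also have "2 * harm (j+1) / M j^2 \<le> 4 * sqrt (M j) / M j^2"
      using harm_sqrt[of "j+1"] Mpos[of j] unfolding M_def by (intro divide_right_mono) auto
    also have "4 * sqrt (M j) / M j^2 = 4 * M j powr (-3/2)"
      using sq_powr[of "M j"] Mpos[of j] by simp
    finally show ?thesis by simp
  qed
  have DSsum: "DS summable_on UNIV"
  proof -
    have s1: "summable (\<lambda>j. 1/(4*M j^3))"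
      using summable_mult[OF sums_summable[OF zeta_sums[of 3]], of "1/4"] unfolding M_def by simp
    have s2: "summable (\<lambda>j. 4 * M j powr (-3/2))"
      using summable_mult[OF summable_powr32, of 4] unfolding M_def by simp
    have "summable DS"
      by (rule summable_comparison_test'[OF summable_add[OF s1 s2], of 0]) (use DSb DSnn in auto)
    then show ?thesis using summable_on_UNIV_nonneg_real_iff[of DS] DSnn by simp
  qed
  have Dsum: "(\<lambda>(j,i). Dm j i) summable_on UNIV \<times> UNIV"
  proof (rule summable_on_SigmaI[where g = DS])
    fix j :: nat
    show "((\<lambda>i. (\<lambda>(j,i). Dm j i) (j, i)) has_sum DS j) UNIV"
      using sums_nonneg_imp_has_sum[OF rowD[of j]] Dnn by simp
  qed (use DSsum Dnn in auto)
  have pSum: "(\<lambda>(j,i). p1 j i) summable_on UNIV \<times> UNIV"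
  proof -
    have "(\<lambda>x. norm ((\<lambda>(j,i). p1 j i) x)) summable_on UNIV \<times> UNIV"
      by (rule Infinite_Sum.abs_summable_on_comparison_test'[OF Dsum]) (use pD in auto)
    then show ?thesis by (rule abs_summable_summable)
  qed
  define X where "X = infsum (\<lambda>(j,i). p1 j i) (UNIV \<times> UNIV)"
  have HX: "((\<lambda>(j,i). p1 j i) has_sum X) (UNIV \<times> UNIV)"
    unfolding X_def using pSum by (rule has_sum_infsum)
  have rows: "((\<lambda>i. p1 j i) has_sum (dd j * (1/M j^(2*b+1)))) UNIV" for j
  proof (rule has_sum_of_sums)
    show "(\<lambda>i. p1 j i) summable_on UNIV" using summable_on_SigmaD1[OF pSum, of j] by simp
    show "(\<lambda>i. p1 j i) sums (dd j * (1/M j^(2*b+1)))"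
      unfolding p1_def using sums_mult2[OF rowB[of j], of "1/M j^(2*b+1)"] by simp
  qed
  have RX: "((\<lambda>j. dd j * (1/M j^(2*b+1))) has_sum X) UNIV"
    by (rule has_sum_Sigma'[OF HX]) (use rows in simp)
  have Xval: "X = -(1/4) * Lam"
  proof -
    have "(\<lambda>j. -(1/4) * (if odd (j+1) then 1/real (j+1)^(2*b+3) else 0)) sums (-(1/4) * Lam)"
      unfolding Lam_def by (intro sums_mult odd_reindex) simp
    moreover have "(\<lambda>j. dd j * (1/M j^(2*b+1))) = (\<lambda>j. -(1/4) * (if odd (j+1) then 1/real (j+1)^(2*b+3) else 0))"
    proof
      fix j
      have gp: "x^2 * x^(2*b+1) = x^(2*b+3)" for x :: real
      proof -
        have "x^2 * x^(2*b+1) = x^(2 + (2*b+1))" by (rule power_add[symmetric])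
        also have "2 + (2*b+1) = 2*b+3" by simp
        finally show ?thesis .
      qed
      have "M j^2 * M j^(2*b+1) = real (j+1)^(2*b+3)" using gp[of "M j"] unfolding M_def .
      then show "dd j * (1/M j^(2*b+1)) = -(1/4) * (if odd (j+1) then 1/real (j+1)^(2*b+3) else 0)"
        unfolding dd_def by (simp add: field_simps)
    qed
    ultimately show ?thesis using has_sum_imp_sums[OF RX] sums_unique2 by metis
  qed
  have HXs: "((\<lambda>(i,j). p1 j i) has_sum X) (UNIV \<times> UNIV)"
    using HX by (subst (asm) has_sum_swap) (simp add: case_prod_unfold)
  have colsum: "(\<lambda>j. p1 j i) summable_on UNIV" for i
    using summable_on_SigmaD1[of "\<lambda>i j. p1 j i", OF has_sum_imp_summable[OF HXs], of i] by simp
  define e where "e = (\<lambda>i. infsum (\<lambda>j. p1 j i) UNIV)"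
  have cols: "((\<lambda>j. p1 j i) has_sum e i) UNIV" for i
    unfolding e_def using colsum by (rule has_sum_infsum)
  have eX: "e sums X"
    by (rule has_sum_imp_sums, rule has_sum_Sigma'[OF HXs]) (use cols in simp)
  have CAe: "CA i = GA i + e i - real b * (1/K i^(2*b+3))" for i
  proof -
    have "(\<lambda>j. pA j i - p1 j i + (if j = 2*i then real b / K i^(2*b+3) else 0)) sums (CA i - e i + real b / K i^(2*b+3))"
      by (intro sums_add sums_diff C has_sum_imp_sums[OF cols] sums_single[of "2*i" "\<lambda>_. real b / K i^(2*b+3)", simplified])
    then have "(\<lambda>j. gg j i) sums (CA i - e i + real b / K i^(2*b+3))" unfolding E .
    then have "GA i = CA i - e i + real b / K i^(2*b+3)" using A[of i] sums_unique2 by blast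
    then show ?thesis by simp
  qed
  have CAs: "CA sums (ZL + X - real b * Lam)"
  proof -
    have "(\<lambda>i. 1/K i^(2*b+3)) sums Lam" unfolding K_def Lam_def by (rule lambda_sums) simp
    then have "(\<lambda>i. GA i + e i - real b * (1/K i^(2*b+3))) sums (ZL + X - real b * Lam)"
      by (intro sums_diff sums_add B eX sums_mult)
    then show ?thesis unfolding CAe[symmetric] by simp
  qed
  have Hform: "harm (2*i+1) / (real (2*i+1))^(2*b+2) = (5/4) * (1/K i^(2*b+3)) - CA i" for i
    unfolding CA_def using hf[of "K i" "2*b" "harm (2*i+1)"] Kpos[of i] unfolding K_def by simp
  have "(\<lambda>i. (5/4) * (1/K i^(2*b+3)) - CA i) sums ((5/4) * Lam - (ZL + X - real b * Lam))"
    unfolding K_def Lam_def by (intro sums_diff sums_mult lambda_sums CAs[unfolded K_def Lam_def]) simp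
  then have S1: "(\<lambda>n. harm (2*n+1) / (real (2*n+1))^(2*b+2)) sums ((5/4) * Lam - (ZL + X - real b * Lam))"
    unfolding Hform .
  have eq: "(5/4) * Lam - (ZL + X - real b * Lam) = (real b + 3/2) * Lam - ZL"
    unfolding Xval by (simp add: algebra_simps)
  from S1 have "(\<lambda>n. harm (2*n+1) / (real (2*n+1))^(2*b+2)) sums ((real b + 3/2) * Lam - ZL)"
    unfolding eq .
  then show ?thesis unfolding Lam_def ZL_def .
qed


theorem mainTheorem15:
  fixes a :: nat
  assumes "a \<ge> 1"
  shows "(\<lambda>n. harm (2*n+1) / (real (2*n+1)) ^ (2*a)) sums
           ((2 * real a + 1) / 2 * dlambda (2 * real a + 1)
            - (\<Sum>j=1..a-1. zeta (real (2*a+1-2*j)) * dlambda (real (2*j))))"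
proof -
  obtain b where a: "a = Suc b" using assms by (cases a) auto
  have e2: "(2 * real a + 1) / 2 = real b + 3/2" unfolding a by simp
  have e3: "2 * real a + 1 = real (2*b+3)" unfolding a by simp
  have e4: "a - 1 = b" unfolding a by simp
  have e5: "(\<Sum>j=1..b. zeta (real (2*a+1-2*j)) * dlambda (real (2*j))) =
            (\<Sum>l=1..b. zeta (real (2*b+3-2*l)) * dlambda (real (2*l)))"
  proof (rule sum.cong)
    fix j assume "j \<in> {1..b}"
    have "2*a+1-2*j = 2*b+3-2*j" unfolding a by simp
    then show "zeta (real (2*a+1-2*j)) * dlambda (real (2*j)) = zeta (real (2*b+3-2*j)) * dlambda (real (2*j))"
      by (simp only:)
  qed simp
  have e1: "2*a = 2*b+2" unfolding a by simp
  show ?thesis unfolding e2 unfolding e3 unfolding e4 unfolding e5 unfolding e1 by (rule main_b)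
qed

end
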